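(* Let $\ell$ be a prime with $\ell\nmid p-1$, $\mathcal{O}$ the valuation ring of $\mathbb{Q}_\ell(\mu_{p-1})$, and $Y$ as in the context. For every character $\psi:\Delta\to\mathcal{O}^\times$, $$e_\psi\,\mathrm{BF}_{\mathcal{O}}(Y)\cong\mathcal{O}/\psi(p\theta)\mathcal{O}.$$ In particular, if $\psi$ is even and nontrivial, then $e_\psi\mathrm{BF}_{\mathcal{O}}(Y)\cong\mathcal{O}$.
   Context: Let $p$ be an odd prime, $\Delta=\mathrm{Gal}(\mathbb{Q}(\zeta_p)/\mathbb{Q})$, $\sigma_i:\zeta_p\mapsto\zeta_p^i$, $j=\sigma_{-1}$; $\psi$ is even if $\psi(j)=1$. $p\theta=-\sum_{i=1}^{p-1}i\sigma_i^{-1}\in\mathbb{Z}[\Delta]$, and $\psi$ is extended linearly to the group ring. Digraphs have incidence $e\mapsto(o(e),t(e))$; derived digraph $X(G,\alpha)$: vertices $V_X\times G$, edges $E_X\times G$, $o(e,\sigma)=(o(e),\sigma)$, $t(e,\sigma)=(t(e),\sigma\alpha(e))$, $G$ acting by left multiplication on the second coordinate. $X$ is the bouquet with $\frac{p-1}{2}p+1$ loops $e_0$, $e_{i,k}$ ($1\le k\le i\le p-1$), $\alpha(e_0)=\sigma_1$, $\alpha(e_{i,k})=\sigma_i^{-1}$, $Y=X(\Delta,\alpha)$. $\mathcal{A}_Y(w)=\sum_{o(\varepsilon)=w}t(\varepsilon)$, $\mathrm{BF}(Y)=\mathrm{coker}(\mathcal{I}-\mathcal{A}_Y)$ (a $\mathbb{Z}[\Delta]$-module),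 $\mathrm{BF}_{\mathcal{O}}(Y)=\mathcal{O}\otimes_{\mathbb{Z}_\ell}(\mathbb{Z}_\ell\otimes_{\mathbb{Z}}\mathrm{BF}(Y))$, and $e_\psi=\frac{1}{p-1}\sum_{\sigma\in\Delta}\psi(\sigma)\sigma^{-1}\in\mathcal{O}[\Delta]$. *)

theory Defs
  imports "HOL-Computational_Algebra.Primes"
begin

section \<open>The Galois group Delta = Gal(Q(zeta_p)/Q), sigma_i encoded by i in {1..p-1}\<close>

definition Delta :: "nat \<Rightarrow> nat set" where
  "Delta p = {1..p-1}"

definition dmult :: "nat \<Rightarrow> nat \<Rightarrow> nat \<Rightarrow> nat" where
  "dmult p i j = (i * j) mod p"

definition dinv :: "nat \<Rightarrow> nat \<Rightarrow> nat" where
  "dinv p i = (THE j. j \<in> Delta p \<and> dmult p i j = 1)"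

definition is_character :: "nat \<Rightarrow> (nat \<Rightarrow> 'o::idom) \<Rightarrow> bool" where
  "is_character p \<psi> \<longleftrightarrow>
     (\<forall>i\<in>Delta p. \<forall>j\<in>Delta p. \<psi> (dmult p i j) = \<psi> i * \<psi> j) \<and>
     (\<forall>i\<in>Delta p. \<psi> i dvd 1)"

text \<open>psi(p theta), p theta = - sum_i i sigma_i^(-1)\<close>
definition ptheta_val :: "nat \<Rightarrow> (nat \<Rightarrow> 'o::idom) \<Rightarrow> 'o" where
  "ptheta_val p \<psi> = - (\<Sum>i\<in>Delta p. of_nat i * \<psi> (dinv p i))"

text \<open>A complete discrete valuation ring with uniformizer l (so unramified over Z_l),
  containing a primitive (p-1)-th root of unity zeta whose residue generates the residue
  field over F_l. This characterizes O up to isomorphism.\<close>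
definition O_ring :: "nat \<Rightarrow> nat \<Rightarrow> 'o::idom itself \<Rightarrow> bool" where
  "O_ring l p T \<longleftrightarrow>
     (of_nat l :: 'o) \<noteq> 0 \<and> \<not> (of_nat l :: 'o) dvd 1 \<and>
     (\<forall>x::'o. x \<noteq> 0 \<longrightarrow> (\<exists>u n. u dvd 1 \<and> x = u * of_nat l ^ n)) \<and>
     (\<forall>x::nat \<Rightarrow> 'o. (\<forall>n. of_nat l ^ n dvd x (Suc n) - x n) \<longrightarrow>
        (\<exists>y. \<forall>n. of_nat l ^ n dvd y - x n)) \<and>
     (\<exists>\<zeta>::'o. \<zeta> ^ (p - 1) = 1 \<and> (\<forall>k. 0 < k \<and> k < p - 1 \<longrightarrow> \<zeta> ^ k \<noteq> 1) \<and>
        (\<forall>x::'o. \<exists>c::nat \<Rightarrow> int. of_nat l dvd x - (\<Sum>k<p - 1. of_int (c k) * \<zeta> ^ k)))"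

definition inv_pm1 :: "nat \<Rightarrow> 'o::idom" where
  "inv_pm1 p = (THE u. u * of_nat (p - 1) = 1)"

definition free_mod :: "'v set \<Rightarrow> ('v \<Rightarrow> 'o::zero) set" where
  "free_mod V = {f. \<forall>v. v \<notin> V \<longrightarrow> f v = 0}"

text \<open>A(w) = sum_{o(e)=w} t(e), written in coordinates: (A f)(v) = sum_{t(e)=v} f(o(e))\<close>
definition adj_op :: "'e set \<Rightarrow> ('e \<Rightarrow> 'v) \<Rightarrow> ('e \<Rightarrow> 'v) \<Rightarrow> ('v \<Rightarrow> 'o::comm_monoid_add) \<Rightarrow> 'v \<Rightarrow> 'o" where
  "adj_op E org trm f = (\<lambda>v. \<Sum>e\<in>{e\<in>E. trm e = v}. f (org e))"

text \<open>congruence modulo the image of I - A on the free O-module on V (cokernel)\<close>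
definition bf_rel :: "'v set \<Rightarrow> 'e set \<Rightarrow> ('e \<Rightarrow> 'v) \<Rightarrow> ('e \<Rightarrow> 'v) \<Rightarrow> (('v \<Rightarrow> 'o::comm_ring_1) \<times> ('v \<Rightarrow> 'o)) set" where
  "bf_rel V E org trm = {(f, g). f \<in> free_mod V \<and> g \<in> free_mod V \<and>
      (\<exists>h\<in>free_mod V. (\<lambda>v. f v - g v) = (\<lambda>v. h v - adj_op E org trm h v))}"

definition der_org :: "('e \<Rightarrow> 'v) \<Rightarrow> 'e \<times> 'g \<Rightarrow> 'v \<times> 'g" where
  "der_org org = (\<lambda>(e, s). (org e, s))"

definition der_trm :: "('g \<Rightarrow> 'g \<Rightarrow> 'g) \<Rightarrow> ('e \<Rightarrow> 'g) \<Rightarrow> ('e \<Rightarrow> 'v) \<Rightarrow> 'e \<times> 'g \<Rightarrow> 'v \<times> 'g" where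
  "der_trm gm \<alpha> trm = (\<lambda>(e, s). (trm e, gm s (\<alpha> e)))"

definition VtX :: "unit set" where "VtX = {()}"

definition EdX :: "nat \<Rightarrow> (nat \<times> nat) set" where
  "EdX p = {(0, 0)} \<union> {(i, k). 1 \<le> k \<and> k \<le> i \<and> i \<le> p - 1}"

definition orgX :: "nat \<times> nat \<Rightarrow> unit" where "orgX = (\<lambda>_. ())"
definition trmX :: "nat \<times> nat \<Rightarrow> unit" where "trmX = (\<lambda>_. ())"

definition alphaX :: "nat \<Rightarrow> nat \<times> nat \<Rightarrow> nat" where
  "alphaX p e = (if e = (0, 0) then 1 else dinv p (fst e))"

definition VY :: "nat \<Rightarrow> (unit \<times> nat) set" where "VY p = VtX \<times> Delta p"
definition EY :: "nat \<Rightarrow> ((nat \<times> nat) \<times> nat) set" where "EY p = EdX p \<times> Delta p"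
definition orgY :: "(nat \<times> nat) \<times> nat \<Rightarrow> unit \<times> nat" where "orgY = der_org orgX"
definition trmY :: "nat \<Rightarrow> (nat \<times> nat) \<times> nat \<Rightarrow> unit \<times> nat" where
  "trmY p = der_trm (dmult p) (alphaX p) trmX"

text \<open>Action of sigma on O^(V_Y) induced by sigma.(v,tau) = (v, sigma tau)\<close>
definition grp_act :: "nat \<Rightarrow> nat \<Rightarrow> (unit \<times> nat \<Rightarrow> 'o::zero) \<Rightarrow> unit \<times> nat \<Rightarrow> 'o" where
  "grp_act p \<sigma> f = (\<lambda>(v, \<tau>). if \<tau> \<in> Delta p then f (v, dmult p (dinv p \<sigma>) \<tau>) else 0)"

definition e_proj :: "nat \<Rightarrow> (nat \<Rightarrow> 'o::idom) \<Rightarrow> (unit \<times> nat \<Rightarrow> 'o) \<Rightarrow> unit \<times> nat \<Rightarrow> 'o" where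
  "e_proj p \<psi> f = (\<lambda>w. inv_pm1 p * (\<Sum>\<sigma>\<in>Delta p. \<psi> \<sigma> * grp_act p (dinv p \<sigma>) f w))"

text \<open>e_psi BF_O(Y) = (e_psi O^(V_Y)) / (image of I - A_Y intersected with it)\<close>
definition ebf_carrier :: "nat \<Rightarrow> (nat \<Rightarrow> 'o::idom) \<Rightarrow> (unit \<times> nat \<Rightarrow> 'o) set" where
  "ebf_carrier p \<psi> = e_proj p \<psi> ` free_mod (VY p)"

definition ebf_rel :: "nat \<Rightarrow> (nat \<Rightarrow> 'o::idom) \<Rightarrow> ((unit \<times> nat \<Rightarrow> 'o) \<times> (unit \<times> nat \<Rightarrow> 'o)) set" where
  "ebf_rel p \<psi> = bf_rel (VY p) (EY p) orgY (trmY p) \<inter> (ebf_carrier p \<psi> \<times> ebf_carrier p \<psi>)"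

definition fadd :: "('v \<Rightarrow> 'o::plus) \<Rightarrow> ('v \<Rightarrow> 'o) \<Rightarrow> 'v \<Rightarrow> 'o" where
  "fadd f g = (\<lambda>v. f v + g v)"
definition fsmul :: "'o::times \<Rightarrow> ('v \<Rightarrow> 'o) \<Rightarrow> 'v \<Rightarrow> 'o" where
  "fsmul r f = (\<lambda>v. r * f v)"

definition ideal_rel :: "'o::comm_ring_1 \<Rightarrow> ('o \<times> 'o) set" where
  "ideal_rel c = {(a, b). c dvd a - b}"

definition quot_iso :: "'a set \<Rightarrow> ('a \<times> 'a) set \<Rightarrow> ('a \<Rightarrow> 'a \<Rightarrow> 'a) \<Rightarrow> ('o \<Rightarrow> 'a \<Rightarrow> 'a)
   \<Rightarrow> 'b set \<Rightarrow> ('b \<times> 'b) set \<Rightarrow> ('b \<Rightarrow> 'b \<Rightarrow> 'b) \<Rightarrow> ('o \<Rightarrow> 'b \<Rightarrow> 'b) \<Rightarrow> bool" where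
  "quot_iso A R1 add1 smul1 B R2 add2 smul2 \<longleftrightarrow>
     (\<exists>\<Phi>. bij_betw \<Phi> (A // R1) (B // R2) \<and>
       (\<forall>x\<in>A. \<forall>y\<in>A. \<forall>x'\<in>B. \<forall>y'\<in>B.
          \<Phi> (R1 `` {x}) = R2 `` {x'} \<and> \<Phi> (R1 `` {y}) = R2 `` {y'} \<longrightarrow>
          \<Phi> (R1 `` {add1 x y}) = R2 `` {add2 x' y'}) \<and>
       (\<forall>r. \<forall>x\<in>A. \<forall>x'\<in>B. \<Phi> (R1 `` {x}) = R2 `` {x'} \<longrightarrow>
          \<Phi> (R1 `` {smul1 r x}) = R2 `` {smul2 r x'}))"

end

theory Submission
  imports Defs "HOL-Number_Theory.Cong"
begin

lemma D_mem: "i \<in> Delta p \<longleftrightarrow> 1 \<le> i \<and> i \<le> p - 1" by (simp add: Delta_def)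

lemma D_coprime: assumes "prime p" "i \<in> Delta p" shows "coprime i p"
proof -
  have "\<not> p dvd i" using assms by (auto simp: Delta_def dest: dvd_imp_le prime_gt_1_nat)
  then have "coprime p i" using assms(1) by (simp add: prime_imp_coprime)
  then show ?thesis by (simp add: coprime_commute)
qed

lemma D_modid: assumes "prime p" "i \<in> Delta p" shows "i mod p = i"
  using assms prime_gt_1_nat[OF assms(1)] by (auto simp: Delta_def)

lemma dm_in: assumes "prime p" "i \<in> Delta p" "j \<in> Delta p" shows "dmult p i j \<in> Delta p"
proof -
  have p1: "p > 1" using assms(1) prime_gt_1_nat by blast
  have "\<not> p dvd i" "\<not> p dvd j" using assms by (auto simp: Delta_def dest: dvd_imp_le)
  then have "\<not> p dvd i * j" using assms(1) prime_dvd_mult_iff by blast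
  then have "i * j mod p \<noteq> 0" by (simp add: dvd_eq_mod_eq_0)
  moreover have "i * j mod p < p" using p1 by simp
  ultimately show ?thesis by (auto simp: Delta_def dmult_def)
qed

lemma dm_cancel: assumes "prime p" "i \<in> Delta p" "j \<in> Delta p" "k \<in> Delta p"
  and "dmult p i j = dmult p i k" shows "j = k"
proof -
  have "[i * j = i * k] (mod p)" using assms(5) by (simp add: dmult_def cong_def)
  then have "[j = k] (mod p)" using cong_mult_lcancel_nat D_coprime[OF assms(1,2)] by blast
  then show ?thesis using D_modid[OF assms(1,3)] D_modid[OF assms(1,4)] by (simp add: cong_def)
qed

lemma dm_comm: "dmult p i j = dmult p j i" by (simp add: dmult_def mult.commute)

lemma dm_assoc: "dmult p (dmult p i j) k = dmult p i (dmult p j k)"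
  by (simp add: dmult_def mod_mult_left_eq mod_mult_right_eq mult.assoc)

lemma dm_one: assumes "prime p" "i \<in> Delta p" shows "dmult p 1 i = i" "dmult p i 1 = i"
  using D_modid[OF assms] by (simp_all add: dmult_def)

lemma one_in: assumes "prime p" shows "1 \<in> Delta p"
  using prime_gt_1_nat[OF assms] by (simp add: Delta_def)

lemma inv_ex: assumes "prime p" "i \<in> Delta p" shows "\<exists>j\<in>Delta p. dmult p i j = 1"
proof -
  have p1: "p > 1" using assms(1) prime_gt_1_nat by blast
  obtain x where x: "[i * x = Suc 0] (mod p)" using cong_solve_coprime_nat D_coprime[OF assms] by blast
  have e: "i * (x mod p) mod p = 1" using x p1 by (simp add: cong_def mod_mult_right_eq)
  have "x mod p \<noteq> 0" using e by (metis mod_0 mult_0_right zero_neq_one)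
  moreover have "x mod p < p" using p1 by simp
  ultimately show ?thesis using e by (intro bexI[of _ "x mod p"]) (auto simp: Delta_def dmult_def)
qed

lemma dinv_prop: assumes "prime p" "i \<in> Delta p" shows "dinv p i \<in> Delta p" "dmult p i (dinv p i) = 1"
proof -
  obtain j where j: "j \<in> Delta p" "dmult p i j = 1" using inv_ex[OF assms] by blast
  have "dinv p i = j" unfolding dinv_def
  proof (rule the_equality)
    show "j \<in> Delta p \<and> dmult p i j = 1" using j by simp
    fix k assume "k \<in> Delta p \<and> dmult p i k = 1"
    then show "k = j" using dm_cancel[OF assms, of k j] j by auto
  qed
  then show "dinv p i \<in> Delta p" "dmult p i (dinv p i) = 1" using j by auto
qed

lemma dinv_unique: assumes "prime p" "i \<in> Delta p" "j \<in> Delta p" "dmult p i j = 1" shows "dinv p i = j"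
  using dm_cancel[OF assms(1,2) dinv_prop(1)[OF assms(1,2)] assms(3)] dinv_prop(2)[OF assms(1,2)] assms(4) by simp

lemma dinv_dinv: assumes "prime p" "i \<in> Delta p" shows "dinv p (dinv p i) = i"
  using dinv_unique[OF assms(1) dinv_prop(1)[OF assms] assms(2)] dinv_prop[OF assms] dm_comm by metis

lemma dinv_one: assumes "prime p" shows "dinv p 1 = 1"
  using dinv_unique[OF assms one_in[OF assms] one_in[OF assms]] dm_one[OF assms one_in[OF assms]] by simp

lemma dinv_mult: assumes "prime p" "i \<in> Delta p" "j \<in> Delta p"
  shows "dinv p (dmult p i j) = dmult p (dinv p i) (dinv p j)"
proof (rule dinv_unique[OF assms(1) dm_in[OF assms] dm_in[OF assms(1) dinv_prop(1)[OF assms(1,2)] dinv_prop(1)[OF assms(1,3)]]])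
  have "dmult p (dmult p i j) (dmult p (dinv p i) (dinv p j))
      = dmult p (dmult p i (dinv p i)) (dmult p j (dinv p j))"
    by (metis dm_assoc dm_comm)
  then show "dmult p (dmult p i j) (dmult p (dinv p i) (dinv p j)) = 1"
    using dinv_prop[OF assms(1,2)] dinv_prop[OF assms(1,3)] dm_one[OF assms(1) one_in[OF assms(1)]] by simp
qed

lemma card_D: "card (Delta p) = p - 1" by (simp add: Delta_def)

lemma reindex_mult: assumes "prime p" "t \<in> Delta p"
  shows "(\<Sum>s\<in>Delta p. F (dmult p s t)) = (\<Sum>s\<in>Delta p. (F s :: 'a::comm_monoid_add))"
proof (rule sum.reindex_bij_witness[of _ "\<lambda>s. dmult p s (dinv p t)" "\<lambda>s. dmult p s t"])
  fix s assume s: "s \<in> Delta p"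
  show "dmult p (dmult p s t) (dinv p t) = s"
    using dinv_prop[OF assms] dm_one[OF assms(1) s] by (simp add: dm_assoc)
  show "dmult p s t \<in> Delta p" using dm_in[OF assms(1) s assms(2)] .
  show "dmult p (dmult p s (dinv p t)) t = s"
    using dinv_prop[OF assms] dm_one[OF assms(1) s] by (simp add: dm_assoc dm_comm[of p "dinv p t"])
  show "dmult p s (dinv p t) \<in> Delta p" using dm_in[OF assms(1) s dinv_prop(1)[OF assms]] .
qed simp

lemma reindex_inv: assumes "prime p"
  shows "(\<Sum>s\<in>Delta p. F (dinv p s)) = (\<Sum>s\<in>Delta p. (F s :: 'a::comm_monoid_add))"
  by (rule sum.reindex_bij_witness[of _ "dinv p" "dinv p"])
     (auto simp: dinv_dinv[OF assms] dinv_prop[OF assms])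

lemma fin_D[simp]: "finite (Delta p)" by (simp add: Delta_def)

lemma chi_mult: assumes "is_character p \<psi>" "i \<in> Delta p" "j \<in> Delta p"
  shows "\<psi> (dmult p i j) = \<psi> i * \<psi> j"
  using assms by (simp add: is_character_def)

lemma chi_unit: assumes "is_character p \<psi>" "i \<in> Delta p" shows "\<psi> i dvd 1"
  using assms by (simp add: is_character_def)

lemma chi_one: assumes "prime p" "is_character p (\<psi>::nat \<Rightarrow> 'o::idom)" shows "\<psi> 1 = 1"
proof -
  have "\<psi> 1 = \<psi> 1 * \<psi> 1" using chi_mult[OF assms(2) one_in[OF assms(1)] one_in[OF assms(1)]]
    dm_one[OF assms(1) one_in[OF assms(1)]] by simp
  moreover have "\<psi> 1 \<noteq> 0" using chi_unit[OF assms(2) one_in[OF assms(1)]] by auto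
  ultimately show ?thesis by (metis mult_cancel_left1)
qed

lemma chi_inv: assumes "prime p" "is_character p (\<psi>::nat \<Rightarrow> 'o::idom)" "i \<in> Delta p"
  shows "\<psi> i * \<psi> (dinv p i) = 1"
  using chi_mult[OF assms(2,3) dinv_prop(1)[OF assms(1,3)]] dinv_prop(2)[OF assms(1,3)] chi_one[OF assms(1,2)]
  by simp

lemma unit_pm1:
  assumes "prime l" "\<not> l dvd (p - 1)" "O_ring l p TYPE('o::idom)"
  shows "(of_nat (p - 1) :: 'o) dvd 1"
proof -
  have nu: "\<not> (of_nat l :: 'o) dvd 1" and dec: "\<And>x::'o. x \<noteq> 0 \<Longrightarrow> \<exists>u n. u dvd 1 \<and> x = u * of_nat l ^ n"
    using assms(3) unfolding O_ring_def by blast+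
  have "coprime l (p - 1)" using prime_imp_coprime[OF assms(1,2)] .
  then have "coprime (int l) (int (p - 1))" by simp
  then obtain u v where uv: "u * int l + v * int (p - 1) = 1" using bezout_int[of "int l" "int (p - 1)"] by auto
  have ndvd: "\<not> (of_nat l :: 'o) dvd of_nat (p - 1)"
  proof
    assume a: "(of_nat l :: 'o) dvd of_nat (p - 1)"
    have "(of_nat l :: 'o) dvd of_int u * of_nat l + of_int v * of_nat (p - 1)"
      by (rule dvd_add[OF dvd_mult[OF dvd_refl] dvd_mult[OF a]])
    moreover have "of_int u * of_nat l + of_int v * of_nat (p - 1) = (of_int (u * int l + v * int (p - 1)) :: 'o)"
      by simp
    ultimately have "(of_nat l :: 'o) dvd of_int (u * int l + v * int (p - 1))" by metis
    then have "(of_nat l :: 'o) dvd 1" using uv by (metis of_int_1)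
    then show False using nu by blast
  qed
  then have "(of_nat (p - 1) :: 'o) \<noteq> 0" by auto
  then obtain u n where un: "u dvd 1" "(of_nat (p - 1) :: 'o) = u * of_nat l ^ n" using dec by blast
  have "n = 0"
  proof (rule ccontr)
    assume "n \<noteq> 0"
    then have "(of_nat l :: 'o) dvd u * of_nat l ^ n" by (simp add: dvd_power)
    then show False using ndvd un by simp
  qed
  then show ?thesis using un by simp
qed

lemma inv_pm1_eq:
  assumes "(of_nat (p - 1) :: 'o::idom) dvd 1" shows "inv_pm1 p * (of_nat (p - 1) :: 'o) = 1"
proof -
  obtain w where w: "1 = (of_nat (p - 1) :: 'o) * w" using assms by (auto elim: dvdE)
  have "inv_pm1 p = w" unfolding inv_pm1_def
  proof (rule the_equality)
    show "w * of_nat (p - 1) = (1::'o)" using w by (simp add: mult.commute)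
    fix u :: 'o assume "u * of_nat (p - 1) = 1"
    then show "u = w" using w by (metis mult.assoc mult.commute mult_1_right)
  qed
  then show ?thesis using w by (simp add: mult.commute)
qed

lemma sum_delta_D: assumes "prime p" "a \<in> Delta p" "t \<in> Delta p"
  shows "(\<Sum>s\<in>Delta p. if dmult p s a = t then F s else 0) = (F (dmult p t (dinv p a)) :: 'a::comm_monoid_add)"
proof -
  have eq: "\<And>s. s \<in> Delta p \<Longrightarrow> (dmult p s a = t) = (s = dmult p t (dinv p a))"
  proof -
    fix s assume s: "s \<in> Delta p"
    show "(dmult p s a = t) = (s = dmult p t (dinv p a))"
    proof
      assume "dmult p s a = t"
      then have "dmult p t (dinv p a) = dmult p (dmult p s a) (dinv p a)" by simp
      also have "\<dots> = dmult p s (dmult p a (dinv p a))" by (rule dm_assoc)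
      finally have "dmult p t (dinv p a) = dmult p s (dmult p a (dinv p a))" .
      then show "s = dmult p t (dinv p a)" using dinv_prop[OF assms(1,2)] dm_one[OF assms(1) s]
        by simp
    next
      assume "s = dmult p t (dinv p a)"
      then show "dmult p s a = t" using dinv_prop[OF assms(1,2)] dm_one[OF assms(1) assms(3)]
        by (simp add: dm_assoc dm_comm[of p "dinv p a"])
    qed
  qed
  have "(\<Sum>s\<in>Delta p. if dmult p s a = t then F s else 0) = (\<Sum>s\<in>Delta p. if s = dmult p t (dinv p a) then F s else 0)"
    by (rule sum.cong) (auto simp: eq)
  also have "\<dots> = F (dmult p t (dinv p a))"
    using dm_in[OF assms(1,3) dinv_prop(1)[OF assms(1,2)]] by (simp add: sum.delta)
  finally show ?thesis .
qed

lemma EdX_split: "EdX p = insert (0, 0) (Sigma (Delta p) (\<lambda>i. {1..i}))" "(0,0) \<notin> Sigma (Delta p) (\<lambda>i. {1..i})"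
  by (auto simp: EdX_def Delta_def)

lemma alpha_in: assumes "prime p" "e \<in> EdX p" shows "alphaX p e \<in> Delta p"
proof (cases "e = (0,0)")
  case True then show ?thesis using one_in[OF assms(1)] by (simp add: alphaX_def)
next
  case False
  then have "fst e \<in> Delta p" using assms(2) by (auto simp: EdX_def Delta_def)
  then show ?thesis using False dinv_prop(1)[OF assms(1)] by (simp add: alphaX_def)
qed

lemma adjL1: assumes "prime p"
  shows "adj_op (EY p) orgY (trmY p) h ((), t) =
    (\<Sum>e\<in>EdX p. \<Sum>s\<in>Delta p. if dmult p s (alphaX p e) = t then h ((), s) else (0::'o::comm_semiring_1))"
proof -
  have "finite (EdX p)" unfolding EdX_split(1) by simp
  then have fin: "finite (EY p)" unfolding EY_def by simp
  have "adj_op (EY p) orgY (trmY p) h ((), t) = (\<Sum>x\<in>EY p. if trmY p x = ((), t) then h (orgY x) else 0)"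
    unfolding adj_op_def using fin by (simp add: sum.inter_filter)
  also have "\<dots> = (\<Sum>e\<in>EdX p. \<Sum>s\<in>Delta p. if dmult p s (alphaX p e) = t then h ((), s) else 0)"
    unfolding EY_def sum.cartesian_product
  proof (rule sum.cong[OF refl])
    fix x assume "x \<in> EdX p \<times> Delta p"
    obtain e s where "x = (e, s)" by (cases x)
    then show "(if trmY p x = ((), t) then h (orgY x) else 0) =
       (case x of (e, s) \<Rightarrow> if dmult p s (alphaX p e) = t then h ((), s) else 0)"
      by (simp add: orgY_def trmY_def der_org_def der_trm_def trmX_def orgX_def)
  qed
  finally show ?thesis .
qed
lemma adjL2: assumes "prime p" "t \<in> Delta p"
  shows "(\<Sum>e\<in>EdX p. \<Sum>s\<in>Delta p. if dmult p s (alphaX p e) = t then h ((), s) else (0::'o::comm_semiring_1))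
     = (\<Sum>e\<in>EdX p. h ((), dmult p t (dinv p (alphaX p e))))"
proof (rule sum.cong[OF refl])
  fix e assume "e \<in> EdX p"
  then have "alphaX p e \<in> Delta p" by (rule alpha_in[OF assms(1)])
  then show "(\<Sum>s\<in>Delta p. if dmult p s (alphaX p e) = t then h ((), s) else 0) = h ((), dmult p t (dinv p (alphaX p e)))"
    by (rule sum_delta_D[OF assms(1) _ assms(2)])
qed
lemma adjL3: assumes "prime p" "t \<in> Delta p"
  shows "(\<Sum>e\<in>EdX p. h ((), dmult p t (dinv p (alphaX p e)))) = 
     h ((), t) + (\<Sum>e\<in>Sigma (Delta p) (\<lambda>i. {1..i}). (h ((), dmult p t (fst e)) :: 'o::comm_semiring_1))"
proof -
  have A: "(\<Sum>e\<in>Sigma (Delta p) (\<lambda>i. {1..i}). h ((), dmult p t (dinv p (alphaX p e))))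
      = (\<Sum>e\<in>Sigma (Delta p) (\<lambda>i. {1..i}). h ((), dmult p t (fst e)))"
  proof (rule sum.cong[OF refl])
    fix e assume e: "e \<in> Sigma (Delta p) (\<lambda>i. {1..i})"
    then have f: "fst e \<in> Delta p" by auto
    have "e \<noteq> (0, 0)" using e EdX_split(2)[of p] by auto
    then have "alphaX p e = dinv p (fst e)" by (simp add: alphaX_def)
    then show "h ((), dmult p t (dinv p (alphaX p e))) = h ((), dmult p t (fst e))"
      using dinv_dinv[OF assms(1) f] by simp
  qed
  have B: "finite (Sigma (Delta p) (\<lambda>i. {1..i}))" by simp
  have C: "h ((), dmult p t (dinv p (alphaX p (0, 0)))) = h ((), t)"
    using dm_one[OF assms(1,2)] dinv_one[OF assms(1)] by (simp add: alphaX_def)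
  have "(\<Sum>e\<in>EdX p. h ((), dmult p t (dinv p (alphaX p e)))) = 
     h ((), dmult p t (dinv p (alphaX p (0, 0)))) + (\<Sum>e\<in>Sigma (Delta p) (\<lambda>i. {1..i}). h ((), dmult p t (dinv p (alphaX p e))))"
    unfolding EdX_split(1)[of p] by (rule sum.insert[OF B EdX_split(2)])
  then show ?thesis using A C by simp
qed
lemma adjL4:
  shows "(\<Sum>e\<in>Sigma (Delta p) (\<lambda>i. {1..i}). (F (fst e) :: 'o::comm_semiring_1)) = (\<Sum>i\<in>Delta p. of_nat i * F i)"
proof -
  have "(\<Sum>e\<in>Sigma (Delta p) (\<lambda>i. {1..i}). F (fst e)) = (\<Sum>(i, k)\<in>Sigma (Delta p) (\<lambda>i. {1..i}). F i)"
    by (rule sum.cong) auto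
  also have "\<dots> = (\<Sum>i\<in>Delta p. \<Sum>k\<in>{1..i}. F i)"
    by (rule sum.Sigma[symmetric]) auto
  also have "\<dots> = (\<Sum>i\<in>Delta p. of_nat i * F i)"
    by (rule sum.cong[OF refl]) simp
  finally show ?thesis .
qed
lemma adj_formula:
  assumes "prime p" "t \<in> Delta p"
  shows "adj_op (EY p) orgY (trmY p) h ((), t) =
     h ((), t) + (\<Sum>i\<in>Delta p. of_nat i * h ((), dmult p t i) :: 'o::comm_semiring_1)"
proof -
  have "adj_op (EY p) orgY (trmY p) h ((), t) =
    (\<Sum>e\<in>EdX p. \<Sum>s\<in>Delta p. if dmult p s (alphaX p e) = t then h ((), s) else 0)"
    by (rule adjL1[OF assms(1)])
  also have "\<dots> = (\<Sum>e\<in>EdX p. h ((), dmult p t (dinv p (alphaX p e))))" by (rule adjL2[OF assms])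
  also have "\<dots> = h ((), t) + (\<Sum>e\<in>Sigma (Delta p) (\<lambda>i. {1..i}). h ((), dmult p t (fst e)))"
    by (rule adjL3[OF assms])
  also have "\<dots> = h ((), t) + (\<Sum>i\<in>Delta p. of_nat i * h ((), dmult p t i))"
    using adjL4[of "\<lambda>i. h ((), dmult p t i)" p] by (simp only:)
  finally show ?thesis .
qed

lemma adj_outside:
  assumes "prime p" "t \<notin> Delta p"
  shows "adj_op (EY p) orgY (trmY p) h (v, t) = 0"
proof -
  have E: "{e \<in> EY p. trmY p e = (v, t)} = {}"
  proof -
    have False if m: "((a, b), s) \<in> EY p" and tr: "trmY p ((a, b), s) = (v, t)" for a b s
    proof -
    from m have m1: "s \<in> Delta p" and m2: "(a, b) \<in> EdX p" by (simp_all add: EY_def)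
    from tr have "dmult p s (alphaX p (a, b)) = t" by (simp add: trmY_def der_trm_def)
    moreover note m1 alpha_in[OF assms(1) m2]
    ultimately show False using dm_in[OF assms(1), of s "alphaX p (a, b)"] assms(2) by simp
    qed
    then show ?thesis by auto
  qed
  have "adj_op (EY p) orgY (trmY p) h (v, t) = sum (\<lambda>e. h (orgY e)) {e \<in> EY p. trmY p e = (v, t)}"
    by (simp add: adj_op_def)
  also have "\<dots> = 0" unfolding E by simp
  finally show ?thesis .
qed

definition Gf :: "nat \<Rightarrow> (nat \<Rightarrow> 'o::idom) \<Rightarrow> 'o \<Rightarrow> unit \<times> nat \<Rightarrow> 'o" where
  "Gf p \<psi> c = (\<lambda>(v, t). if t \<in> Delta p then c * \<psi> (dinv p t) else 0)"

lemma Gf_app: "Gf p \<psi> c (v, t) = (if t \<in> Delta p then c * \<psi> (dinv p t) else 0)"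
  by (simp add: Gf_def)

lemma Gf_free: "Gf p \<psi> c \<in> free_mod (VY p)"
  by (auto simp: free_mod_def VY_def VtX_def Gf_app)

lemma Gf_one: assumes "prime p" "is_character p \<psi>" shows "Gf p \<psi> c ((), 1) = c"
  using one_in[OF assms(1)] dinv_one[OF assms(1)] chi_one[OF assms] by (simp add: Gf_app)

lemma Gf_diff: "(\<lambda>v. Gf p \<psi> a v - Gf p \<psi> b v) = Gf p \<psi> (a - b)"
  by (auto simp: Gf_def algebra_simps)

lemma Gf_add: "fadd (Gf p \<psi> a) (Gf p \<psi> b) = Gf p \<psi> (a + b)"
  by (auto simp: fadd_def Gf_def algebra_simps)

lemma Gf_smul: "fsmul r (Gf p \<psi> a) = Gf p \<psi> (r * a)"
  by (auto simp: fsmul_def Gf_def algebra_simps)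

lemma dm_cancel_r: assumes "prime p" "s \<in> Delta p" "t \<in> Delta p"
  shows "dmult p (dmult p s t) (dinv p t) = s"
  using dinv_prop[OF assms(1,3)] dm_one[OF assms(1,2)] by (simp add: dm_assoc)

lemma IA_formula: assumes "prime p" "t \<in> Delta p"
  shows "h ((), t) - adj_op (EY p) orgY (trmY p) h ((), t) =
     - (\<Sum>i\<in>Delta p. of_nat i * h ((), dmult p t i) :: 'o::comm_ring_1)"
  using adj_formula[OF assms, of h] by simp

lemma chi_dinv_mult: assumes "prime p" "is_character p \<psi>" "i \<in> Delta p" "j \<in> Delta p"
  shows "\<psi> (dinv p (dmult p i j)) = \<psi> (dinv p i) * \<psi> (dinv p j)"
  using dinv_mult[OF assms(1,3,4)] chi_mult[OF assms(2) dinv_prop(1)[OF assms(1,3)] dinv_prop(1)[OF assms(1,4)]]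
  by simp

lemma IA_G: assumes "prime p" "is_character p (\<psi> :: nat \<Rightarrow> 'o::idom)"
  shows "(\<lambda>v. Gf p \<psi> k v - adj_op (EY p) orgY (trmY p) (Gf p \<psi> k) v) = Gf p \<psi> (ptheta_val p \<psi> * k)"
proof
  fix w :: "unit \<times> nat"
  obtain t where w: "w = ((), t)" by (cases w) auto
  show "Gf p \<psi> k w - adj_op (EY p) orgY (trmY p) (Gf p \<psi> k) w = Gf p \<psi> (ptheta_val p \<psi> * k) w"
  proof (cases "t \<in> Delta p")
    case False
    then show ?thesis using adj_outside[OF assms(1) False] by (simp add: w Gf_app)
  next
    case True
    have "Gf p \<psi> k w - adj_op (EY p) orgY (trmY p) (Gf p \<psi> k) w
        = - (\<Sum>i\<in>Delta p. of_nat i * Gf p \<psi> k ((), dmult p t i))"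
      unfolding w by (rule IA_formula[OF assms(1) True])
    also have "\<dots> = - (\<Sum>i\<in>Delta p. (k * \<psi> (dinv p t)) * (of_nat i * \<psi> (dinv p i)))"
    proof -
      have "(\<Sum>i\<in>Delta p. of_nat i * Gf p \<psi> k ((), dmult p t i))
          = (\<Sum>i\<in>Delta p. (k * \<psi> (dinv p t)) * (of_nat i * \<psi> (dinv p i)))"
      proof (rule sum.cong[OF refl])
        fix i assume i: "i \<in> Delta p"
        show "of_nat i * Gf p \<psi> k ((), dmult p t i) = (k * \<psi> (dinv p t)) * (of_nat i * \<psi> (dinv p i))"
          using dm_in[OF assms(1) True i] chi_dinv_mult[OF assms True i] by (simp add: Gf_app)
      qed
      then show ?thesis by simp
    qed
    also have "\<dots> = Gf p \<psi> (ptheta_val p \<psi> * k) w"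
      by (simp add: w Gf_app True ptheta_val_def sum_distrib_left[symmetric])
    finally show ?thesis .
  qed
qed

lemma card_D_of: "(\<Sum>t\<in>Delta p. (c::'o::comm_semiring_1)) = of_nat (p - 1) * c"
  by (simp add: card_D)

lemma rel_G:
  assumes "prime p" "is_character p (\<psi> :: nat \<Rightarrow> 'o::idom)" and u: "inv_pm1 p * (of_nat (p - 1) :: 'o) = 1"
  shows "(\<exists>h\<in>free_mod (VY p). Gf p \<psi> d = (\<lambda>v. h v - adj_op (EY p) orgY (trmY p) h v)) \<longleftrightarrow> ptheta_val p \<psi> dvd d"
proof
  assume "ptheta_val p \<psi> dvd d"
  then obtain k where "d = ptheta_val p \<psi> * k" by (auto elim: dvdE)
  then show "\<exists>h\<in>free_mod (VY p). Gf p \<psi> d = (\<lambda>v. h v - adj_op (EY p) orgY (trmY p) h v)"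
    using IA_G[OF assms(1,2), of k] Gf_free by metis
next
  assume "\<exists>h\<in>free_mod (VY p). Gf p \<psi> d = (\<lambda>v. h v - adj_op (EY p) orgY (trmY p) h v)"
  then obtain h where hE: "Gf p \<psi> d = (\<lambda>v. h v - adj_op (EY p) orgY (trmY p) h v)" by blast
  define L where "L = (\<Sum>s\<in>Delta p. \<psi> s * h ((), s))"
  have pt: "\<And>t. t \<in> Delta p \<Longrightarrow> d * \<psi> (dinv p t) = - (\<Sum>i\<in>Delta p. of_nat i * h ((), dmult p t i))"
  proof -
    fix t assume t: "t \<in> Delta p"
    have "Gf p \<psi> d ((), t) = h ((), t) - adj_op (EY p) orgY (trmY p) h ((), t)" using hE by metis
    then show "d * \<psi> (dinv p t) = - (\<Sum>i\<in>Delta p. of_nat i * h ((), dmult p t i))"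
      using IA_formula[OF assms(1) t, of h] t by (simp add: Gf_app)
  qed
  have inner: "\<And>i. i \<in> Delta p \<Longrightarrow> (\<Sum>t\<in>Delta p. \<psi> t * h ((), dmult p t i)) = \<psi> (dinv p i) * L"
  proof -
    fix i assume i: "i \<in> Delta p"
    have "(\<Sum>t\<in>Delta p. \<psi> t * h ((), dmult p t i))
        = (\<Sum>t\<in>Delta p. (\<lambda>s. \<psi> (dmult p s (dinv p i)) * h ((), s)) (dmult p t i))"
      by (rule sum.cong[OF refl]) (simp add: dm_cancel_r[OF assms(1) _ i])
    also have "\<dots> = (\<Sum>s\<in>Delta p. \<psi> (dmult p s (dinv p i)) * h ((), s))"
      by (rule reindex_mult[OF assms(1) i])
    also have "\<dots> = (\<Sum>s\<in>Delta p. \<psi> (dinv p i) * (\<psi> s * h ((), s)))"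
      by (rule sum.cong[OF refl]) (simp add: chi_mult[OF assms(2) _ dinv_prop(1)[OF assms(1) i]])
    finally show "(\<Sum>t\<in>Delta p. \<psi> t * h ((), dmult p t i)) = \<psi> (dinv p i) * L"
      by (simp add: L_def sum_distrib_left)
  qed
  have "of_nat (p - 1) * d = (\<Sum>t\<in>Delta p. \<psi> t * (d * \<psi> (dinv p t)))"
  proof -
    have "(\<Sum>t\<in>Delta p. \<psi> t * (d * \<psi> (dinv p t))) = (\<Sum>t\<in>Delta p. d)"
      by (rule sum.cong[OF refl]) (metis chi_inv[OF assms(1,2)] mult.commute mult.left_commute mult_1_right)
    then show ?thesis by (metis card_D_of)
  qed
  also have "\<dots> = (\<Sum>t\<in>Delta p. \<psi> t * - (\<Sum>i\<in>Delta p. of_nat i * h ((), dmult p t i)))"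
    by (rule sum.cong[OF refl]) (simp add: pt)
  also have "\<dots> = - (\<Sum>t\<in>Delta p. \<Sum>i\<in>Delta p. of_nat i * (\<psi> t * h ((), dmult p t i)))"
    by (simp add: sum_negf[symmetric] sum_distrib_left mult.left_commute)
  also have "\<dots> = - (\<Sum>i\<in>Delta p. \<Sum>t\<in>Delta p. of_nat i * (\<psi> t * h ((), dmult p t i)))"
    by (subst sum.swap) (rule refl)
  also have "\<dots> = - (\<Sum>i\<in>Delta p. of_nat i * (\<Sum>t\<in>Delta p. \<psi> t * h ((), dmult p t i)))"
    by (simp add: sum_distrib_left)
  also have "\<dots> = - (\<Sum>i\<in>Delta p. of_nat i * (\<psi> (dinv p i) * L))"
    by (rule arg_cong[where f=uminus], rule sum.cong[OF refl]) (simp add: inner)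
  also have "\<dots> = ptheta_val p \<psi> * L"
    by (simp add: ptheta_val_def sum_distrib_right mult.assoc)
  finally have "of_nat (p - 1) * d = ptheta_val p \<psi> * L" .
  then have "d = ptheta_val p \<psi> * (inv_pm1 p * L)"
    by (metis u mult.assoc mult.commute mult_1_left)
  then show "ptheta_val p \<psi> dvd d" by simp
qed

lemma carrier_eq:
  assumes "prime p" "is_character p (\<psi> :: nat \<Rightarrow> 'o::idom)" and u: "inv_pm1 p * (of_nat (p - 1) :: 'o) = 1"
  shows "ebf_carrier p \<psi> = range (Gf p \<psi>)"
proof -
  have ep: "e_proj p \<psi> f = Gf p \<psi> (inv_pm1 p * (\<Sum>s\<in>Delta p. \<psi> s * f ((), s)))" for f
  proof
    fix w :: "unit \<times> nat"
    obtain t where w: "w = ((), t)" by (cases w) auto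
    show "e_proj p \<psi> f w = Gf p \<psi> (inv_pm1 p * (\<Sum>s\<in>Delta p. \<psi> s * f ((), s))) w"
    proof (cases "t \<in> Delta p")
      case False
      then show ?thesis by (simp add: w Gf_app e_proj_def grp_act_def)
    next
      case True
      have "(\<Sum>\<sigma>\<in>Delta p. \<psi> \<sigma> * grp_act p (dinv p \<sigma>) f w) = (\<Sum>\<sigma>\<in>Delta p. \<psi> \<sigma> * f ((), dmult p \<sigma> t))"
        by (rule sum.cong[OF refl]) (simp add: w True grp_act_def dinv_dinv[OF assms(1)])
      also have "\<dots> = (\<Sum>\<sigma>\<in>Delta p. (\<lambda>s. \<psi> (dmult p s (dinv p t)) * f ((), s)) (dmult p \<sigma> t))"
        by (rule sum.cong[OF refl]) (simp add: dm_cancel_r[OF assms(1) _ True])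
      also have "\<dots> = (\<Sum>s\<in>Delta p. \<psi> (dmult p s (dinv p t)) * f ((), s))"
        by (rule reindex_mult[OF assms(1) True])
      also have "\<dots> = (\<Sum>s\<in>Delta p. \<psi> (dinv p t) * (\<psi> s * f ((), s)))"
        by (rule sum.cong[OF refl]) (simp add: chi_mult[OF assms(2) _ dinv_prop(1)[OF assms(1) True]])
      finally show ?thesis
        by (simp add: e_proj_def w Gf_app True sum_distrib_left[symmetric])
    qed
  qed
  show ?thesis
  proof
    show "ebf_carrier p \<psi> \<subseteq> range (Gf p \<psi>)" unfolding ebf_carrier_def using ep by auto
    show "range (Gf p \<psi>) \<subseteq> ebf_carrier p \<psi>"
    proof
      fix g assume "g \<in> range (Gf p \<psi>)"
      then obtain c where g: "g = Gf p \<psi> c" by blast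
      define f :: "unit \<times> nat \<Rightarrow> 'o" where "f = (\<lambda>(v, t). if t = 1 then of_nat (p - 1) * c else 0)"
      have ff: "f \<in> free_mod (VY p)"
        using one_in[OF assms(1)] by (auto simp: f_def free_mod_def VY_def VtX_def)
      have "(\<Sum>s\<in>Delta p. \<psi> s * f ((), s)) = (\<Sum>s\<in>Delta p. if s = 1 then \<psi> s * (of_nat (p - 1) * c) else 0)"
        by (rule sum.cong[OF refl]) (simp add: f_def)
      also have "\<dots> = of_nat (p - 1) * c"
        using one_in[OF assms(1)] chi_one[OF assms(1,2)] by (simp add: sum.delta)
      finally have "e_proj p \<psi> f = g" using ep[of f] u g by (simp add: mult.assoc[symmetric])
      then show "g \<in> ebf_carrier p \<psi>" unfolding ebf_carrier_def using ff by blast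
    qed
  qed
qed

lemma ideal_class_eq: "ideal_rel (c::'o::comm_ring_1) `` {a} = ideal_rel c `` {b} \<longleftrightarrow> c dvd a - b"
proof
  assume "ideal_rel c `` {a} = ideal_rel c `` {b}"
  moreover have "b \<in> ideal_rel c `` {b}" by (simp add: ideal_rel_def)
  ultimately show "c dvd a - b" by (auto simp: ideal_rel_def)
next
  assume h: "c dvd a - b"
  show "ideal_rel c `` {a} = ideal_rel c `` {b}"
  proof (auto simp: ideal_rel_def)
    fix x assume "c dvd a - x"
    then have "c dvd (a - x) - (a - b)" using h by (rule dvd_diff)
    then show "c dvd b - x" by (simp add: algebra_simps)
  next
    fix x assume "c dvd b - x"
    then have "c dvd (b - x) + (a - b)" using h by (rule dvd_add)
    then show "c dvd a - x" by (simp add: algebra_simps)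
  qed
qed

lemma quot_iso_G:
  fixes G :: "'o::comm_ring_1 \<Rightarrow> 'a"
  assumes A: "A = range G" and R: "\<And>a b. (G a, G b) \<in> R1 \<longleftrightarrow> c dvd a - b"
    and Rsub: "R1 \<subseteq> A \<times> A"
    and add: "\<And>a b. add1 (G a) (G b) = G (a + b)" and sm: "\<And>r a. smul1 r (G a) = G (r * a)"
  shows "quot_iso A R1 add1 smul1 UNIV (ideal_rel c) (+) (*)"
proof -
  define \<Phi> where "\<Phi> X = {b. \<exists>a. G a \<in> X \<and> c dvd a - b}" for X
  have K: "\<Phi> (R1 `` {G a}) = ideal_rel c `` {a}" for a
  proof (auto simp: \<Phi>_def ideal_rel_def)
    fix b a' assume "(G a, G a') \<in> R1" "c dvd a' - b"
    then have "c dvd (a - a') + (a' - b)" using R by (intro dvd_add) auto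
    then show "c dvd a - b" by simp
  next
    fix b assume "c dvd a - b"
    moreover have "(G a, G a) \<in> R1" using R by simp
    ultimately show "\<exists>a'. (G a, G a') \<in> R1 \<and> c dvd a' - b" by (intro exI[of _ a]) auto
  qed
  have C: "R1 `` {G a} = R1 `` {G b}" if "c dvd a - b" for a b
  proof -
    have "(G a, x) \<in> R1 \<longleftrightarrow> (G b, x) \<in> R1" for x
    proof -
      have "(G a, x) \<in> R1 \<Longrightarrow> x \<in> A" "(G b, x) \<in> R1 \<Longrightarrow> x \<in> A" using Rsub by auto
      then have "(G a, x) \<in> R1 \<or> (G b, x) \<in> R1 \<Longrightarrow> \<exists>a'. x = G a'" using A by auto
      moreover have "(G a, G a') \<in> R1 \<longleftrightarrow> (G b, G a') \<in> R1" for a'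
      proof -
        have "c dvd a - a' \<longleftrightarrow> c dvd b - a'"
        proof
          assume "c dvd a - a'" then have "c dvd (a - a') - (a - b)" using that by (rule dvd_diff)
          then show "c dvd b - a'" by (simp add: algebra_simps)
        next
          assume "c dvd b - a'" then have "c dvd (b - a') + (a - b)" using that by (rule dvd_add)
          then show "c dvd a - a'" by (simp add: algebra_simps)
        qed
        then show ?thesis using R by simp
      qed
      ultimately show ?thesis by blast
    qed
    then show ?thesis by auto
  qed
  have AQ: "A // R1 = (\<lambda>a. R1 `` {G a}) ` UNIV" unfolding A quotient_def by auto
  have BQ: "(UNIV :: 'o set) // ideal_rel c = (\<lambda>a. ideal_rel c `` {a}) ` UNIV" unfolding quotient_def by auto
  have bij: "bij_betw \<Phi> (A // R1) (UNIV // ideal_rel c)"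
  proof (rule bij_betw_imageI)
    show "inj_on \<Phi> (A // R1)"
    proof (rule inj_onI)
      fix X Y assume "X \<in> A // R1" "Y \<in> A // R1" "\<Phi> X = \<Phi> Y"
      then obtain a b where "X = R1 `` {G a}" "Y = R1 `` {G b}" "\<Phi> X = \<Phi> Y" unfolding AQ by auto
      then show "X = Y" using K ideal_class_eq C by metis
    qed
    show "\<Phi> ` (A // R1) = UNIV // ideal_rel c" unfolding AQ BQ image_image K by simp
  qed
  show ?thesis unfolding quot_iso_def
  proof (intro exI[of _ \<Phi>] conjI bij ballI allI impI)
    fix x y x' y' assume "x \<in> A" "y \<in> A" and h: "\<Phi> (R1 `` {x}) = ideal_rel c `` {x'} \<and> \<Phi> (R1 `` {y}) = ideal_rel c `` {y'}"
    then obtain a b where ab: "x = G a" "y = G b" using A by auto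
    have "c dvd a - x'" "c dvd b - y'" using h K ideal_class_eq unfolding ab by metis+
    then have "c dvd (a + b) - (x' + y')" using dvd_add[of c "a - x'" "b - y'"] by (simp add: algebra_simps)
    then show "\<Phi> (R1 `` {add1 x y}) = ideal_rel c `` {x' + y'}" unfolding ab add K ideal_class_eq .
  next
    fix r x x' assume "x \<in> A" and h: "\<Phi> (R1 `` {x}) = ideal_rel c `` {x'}"
    then obtain a where ab: "x = G a" using A by auto
    have "c dvd a - x'" using h K ideal_class_eq unfolding ab by metis
    then have "c dvd r * (a - x')" by simp
    then have "c dvd r * a - r * x'" by (simp add: algebra_simps)
    then show "\<Phi> (R1 `` {smul1 r x}) = ideal_rel c `` {r * x'}" unfolding ab sm K ideal_class_eq .
  qed
qed

lemma sum_chi_zero: assumes "prime p" "is_character p (\<psi> :: nat \<Rightarrow> 'o::idom)" "s0 \<in> Delta p" "\<psi> s0 \<noteq> 1"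
  shows "(\<Sum>s\<in>Delta p. \<psi> s) = 0"
proof -
  have "(\<Sum>s\<in>Delta p. \<psi> s) = (\<Sum>s\<in>Delta p. \<psi> (dmult p s s0))" by (rule reindex_mult[OF assms(1,3), symmetric])
  also have "\<dots> = (\<Sum>s\<in>Delta p. \<psi> s0 * \<psi> s)"
    by (rule sum.cong[OF refl]) (simp add: chi_mult[OF assms(2) _ assms(3)] mult.commute)
  finally have E: "(\<Sum>s\<in>Delta p. \<psi> s) = (\<Sum>s\<in>Delta p. \<psi> s0 * \<psi> s)" .
  have "\<psi> s0 * (\<Sum>s\<in>Delta p. \<psi> s) = (\<Sum>s\<in>Delta p. \<psi> s0 * \<psi> s)" by (rule sum_distrib_left)
  then have "(\<Sum>s\<in>Delta p. \<psi> s) = \<psi> s0 * (\<Sum>s\<in>Delta p. \<psi> s)" using E by simp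
  then have "(\<psi> s0 - 1) * (\<Sum>s\<in>Delta p. \<psi> s) = 0" by (simp add: algebra_simps)
  then show ?thesis using assms(4) by simp
qed

lemma dm_neg: assumes "prime p" "i \<in> Delta p" shows "dmult p i (p - 1) = p - i"
proof -
  have i: "1 \<le> i" "i \<le> p - 1" using assms(2) by (auto simp: Delta_def)
  have "i * (p - 1) = (i - 1) * p + (p - i)" using i by (simp add: algebra_simps diff_mult_distrib diff_mult_distrib2)
  then have "i * (p - 1) mod p = (p - i) mod p" by simp
  also have "\<dots> = p - i" using i by simp
  finally show ?thesis by (simp add: dmult_def)
qed

lemma ptheta_zero:
  assumes "prime p" "is_character p (\<psi> :: nat \<Rightarrow> 'o::idom)" "\<psi> (p - 1) = 1" "\<exists>s\<in>Delta p. \<psi> s \<noteq> 1"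
    and two: "(2::'o) \<noteq> 0"
  shows "ptheta_val p \<psi> = 0"
proof -
  have pm: "p - 1 \<in> Delta p" using prime_gt_1_nat[OF assms(1)] by (simp add: Delta_def)
  have ipm: "\<psi> (dinv p (p - 1)) = 1" using chi_inv[OF assms(1,2) pm] assms(3) by simp
  define S where "S = (\<Sum>i\<in>Delta p. of_nat i * \<psi> (dinv p i))"
  have Z: "(\<Sum>i\<in>Delta p. \<psi> (dinv p i)) = 0"
    using reindex_inv[OF assms(1), of \<psi>] sum_chi_zero[OF assms(1,2)] assms(4) by auto
  have "S = (\<Sum>i\<in>Delta p. (\<lambda>j. of_nat j * \<psi> (dinv p j)) (dmult p i (p - 1)))"
    unfolding S_def by (rule reindex_mult[OF assms(1) pm, symmetric])
  also have "\<dots> = (\<Sum>i\<in>Delta p. of_nat (p - i) * \<psi> (dinv p i))"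
  proof (rule sum.cong[OF refl])
    fix i assume i: "i \<in> Delta p"
    show "(\<lambda>j. of_nat j * \<psi> (dinv p j)) (dmult p i (p - 1)) = of_nat (p - i) * \<psi> (dinv p i)"
      using chi_dinv_mult[OF assms(1,2) i pm] dm_neg[OF assms(1) i] ipm by simp
  qed
  finally have S2: "S = (\<Sum>i\<in>Delta p. of_nat (p - i) * \<psi> (dinv p i))" .
  have "S + S = (\<Sum>i\<in>Delta p. of_nat p * \<psi> (dinv p i))"
  proof -
    have "S + S = (\<Sum>i\<in>Delta p. (of_nat i + of_nat (p - i)) * \<psi> (dinv p i))"
      unfolding S_def by (subst S2[unfolded S_def]) (simp add: sum.distrib distrib_right)
    also have "\<dots> = (\<Sum>i\<in>Delta p. of_nat p * \<psi> (dinv p i))"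
      by (rule sum.cong[OF refl]) (auto simp: Delta_def simp flip: of_nat_add)
    finally show ?thesis .
  qed
  also have "\<dots> = 0" using Z by (simp add: sum_distrib_left[symmetric])
  finally have "2 * S = 0" by simp
  then have "S = 0" using two by simp
  then show ?thesis by (simp add: ptheta_val_def S_def)
qed

theorem theorem5p11:
  fixes p l :: nat and \<psi> :: "nat \<Rightarrow> 'o::idom"
  assumes "prime p" and "odd p" and "prime l" and "\<not> l dvd (p - 1)"
    and "O_ring l p TYPE('o)"
    and "is_character p \<psi>"
  shows "quot_iso (ebf_carrier p \<psi>) (ebf_rel p \<psi>) fadd fsmul
                  (UNIV :: 'o set) (ideal_rel (ptheta_val p \<psi>)) (+) (*)
       \<and> ((\<psi> (p - 1) = 1 \<and> (\<exists>\<sigma>\<in>Delta p. \<psi> \<sigma> \<noteq> 1)) \<longrightarrow>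
          quot_iso (ebf_carrier p \<psi>) (ebf_rel p \<psi>) fadd fsmul
                   (UNIV :: 'o set) Id (+) (*))"
proof -
  have unit: "(of_nat (p - 1) :: 'o) dvd 1" using unit_pm1[OF assms(3,4,5)] .
  have u: "inv_pm1 p * (of_nat (p - 1) :: 'o) = 1" using inv_pm1_eq[OF unit] .
  have car: "ebf_carrier p \<psi> = range (Gf p \<psi>)" using carrier_eq[OF assms(1,6) u] .
  have R: "(Gf p \<psi> a, Gf p \<psi> b) \<in> ebf_rel p \<psi> \<longleftrightarrow> ptheta_val p \<psi> dvd a - b" for a b
  proof -
    have "(Gf p \<psi> a, Gf p \<psi> b) \<in> ebf_rel p \<psi> \<longleftrightarrow>
      (\<exists>h\<in>free_mod (VY p). Gf p \<psi> (a - b) = (\<lambda>v. h v - adj_op (EY p) orgY (trmY p) h v))"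
      unfolding ebf_rel_def bf_rel_def car using Gf_free by (auto simp: Gf_diff)
    then show ?thesis using rel_G[OF assms(1,6) u] by simp
  qed
  have Rsub: "ebf_rel p \<psi> \<subseteq> ebf_carrier p \<psi> \<times> ebf_carrier p \<psi>" by (auto simp: ebf_rel_def)
  have Q: "quot_iso (ebf_carrier p \<psi>) (ebf_rel p \<psi>) fadd fsmul (UNIV :: 'o set) (ideal_rel (ptheta_val p \<psi>)) (+) (*)"
    by (rule quot_iso_G[OF car R Rsub Gf_add Gf_smul])
  moreover have "quot_iso (ebf_carrier p \<psi>) (ebf_rel p \<psi>) fadd fsmul (UNIV :: 'o set) Id (+) (*)"
    if ev: "\<psi> (p - 1) = 1" and nt: "\<exists>\<sigma>\<in>Delta p. \<psi> \<sigma> \<noteq> 1"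
  proof -
    have "even (p - 1)" using assms(2) by simp
    then obtain k where "p - 1 = 2 * k" unfolding dvd_def by blast
    then have "(2::'o) dvd of_nat (p - 1)" by simp
    then have "(2::'o) dvd 1" using unit dvd_trans by blast
    then have two: "(2::'o) \<noteq> 0" by auto
    have "ptheta_val p \<psi> = 0" using ptheta_zero[OF assms(1,6) ev nt two] .
    moreover have "ideal_rel (0::'o) = Id" by (auto simp: ideal_rel_def)
    ultimately show ?thesis using Q by simp
  qed
  ultimately show ?thesis by blast
qed

end
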